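(* The subgroup $E$ is $S_0$-invariant, and every proper $S_0$-invariant subgroup of $G$ is contained in $E$; thus $E$ is the unique maximal proper $S_0$-invariant subgroup of $G$. Moreover, if $H$ is a proper $S_0$-invariant subgroup of $E$, then in the reduced word of every element of $H$ each letter $a_i$ occurs either not at all or at least twice.
   Context: Let $G=\mathbb Z_2^{*\infty}$ be the free product of countably many copies of $\mathbb Z_2=\mathbb Z/2\mathbb Z$, with canonical generators $a_1,a_2,\dots$ ($a_i^2=e$). Every element has a unique reduced word in the $a_i$ (no two consecutive equal letters). $E\le G$ is the subgroup of all elements whose reduced word has even length. $S_0\subseteq\mathrm{End}(G)$ is the subsemigroup generated by: (1) for every $n\in\mathbb N$ and every choice of indices $i(1),\dots,i(n)$, the endomorphism with $a_k\mapsto a_{i(k)}$ for $1\le k\le n$ and $a_k\mapsto a_k$ for $k>n$ ("finite identification of letters"); (2) for every $k$, the conjugation $w\mapsto a_kwa_k$. A subgroup $H\le G$ is $S_0$-invariant if $\phi(H)\subseteq H$ for all $\phi\in S_0$. *)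

theory Defs
  imports "HOL-Algebra.Group"
begin

text \<open>Elements of G = free product of countably many copies of Z/2 are represented by
  their reduced words: lists of letter indices (natural numbers; letter k stands for a_k)
  with no two consecutive equal letters.\<close>

definition reduced :: "nat list \<Rightarrow> bool" where
  "reduced w \<longleftrightarrow> successively (\<noteq>) w"

definition cons_red :: "nat \<Rightarrow> nat list \<Rightarrow> nat list" where
  "cons_red a w = (case w of [] \<Rightarrow> [a] | b # w' \<Rightarrow> (if a = b then w' else a # w))"

definition wmul :: "nat list \<Rightarrow> nat list \<Rightarrow> nat list" where
  "wmul xs ys = foldr cons_red xs ys"

definition FG :: "nat list monoid" where
  "FG = \<lparr> carrier = {w. reduced w}, mult = wmul, one = [] \<rparr>"

definition subst_endo :: "(nat \<Rightarrow> nat) \<Rightarrow> nat list \<Rightarrow> nat list" where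
  "subst_endo \<sigma> w = foldr (\<lambda>a v. cons_red (\<sigma> a) v) w []"

definition conj_endo :: "nat \<Rightarrow> nat list \<Rightarrow> nat list" where
  "conj_endo k w = wmul [k] (wmul w [k])"

inductive_set S0 :: "(nat list \<Rightarrow> nat list) set" where
  ident: "(\<And>k. n \<le> k \<Longrightarrow> \<sigma> k = k) \<Longrightarrow> subst_endo \<sigma> \<in> S0"
| conj: "conj_endo k \<in> S0"
| comp: "\<phi> \<in> S0 \<Longrightarrow> \<psi> \<in> S0 \<Longrightarrow> \<phi> \<circ> \<psi> \<in> S0"

definition S0_invariant :: "nat list set \<Rightarrow> bool" where
  "S0_invariant H \<longleftrightarrow> (\<forall>\<phi>\<in>S0. \<phi> ` H \<subseteq> H)"

definition E :: "nat list set" where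
  "E = {w \<in> carrier FG. even (length w)}"

end

theory Submission
  imports Defs
begin

lemma reduced_Cons2[simp]: "reduced (a # b # w) \<longleftrightarrow> a \<noteq> b \<and> reduced (b # w)"
  by (simp add: reduced_def)

lemma reduced_Nil[simp]: "reduced []" and reduced_single[simp]: "reduced [a]"
  by (simp_all add: reduced_def)

lemma reduced_tl: "reduced (a # w) \<Longrightarrow> reduced w"
  by (cases w) auto

lemma cons_red_reduced: "reduced v \<Longrightarrow> reduced (cons_red a v)"
  by (cases v) (auto simp: cons_red_def intro: reduced_tl)

lemma cons_red_invol: "reduced v \<Longrightarrow> cons_red a (cons_red a v) = v"
proof (cases v)
  case Nil then show ?thesis by (simp add: cons_red_def)
next
  case (Cons b v')
  assume r: "reduced v"
  show ?thesis
  proof (cases "a = b")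
    case True
    then show ?thesis using r Cons by (cases v') (auto simp: cons_red_def)
  next
    case False then show ?thesis using Cons by (simp add: cons_red_def)
  qed
qed

lemma cons_red_noteq: "(v = [] \<or> hd v \<noteq> a) \<Longrightarrow> cons_red a v = a # v"
  by (cases v) (auto simp: cons_red_def)

lemma wmul_reduced: "reduced y \<Longrightarrow> reduced (wmul x y)"
  by (induction x) (auto simp: wmul_def intro: cons_red_reduced)

lemma wmul_Cons: "wmul (a # x) y = cons_red a (wmul x y)"
  by (simp add: wmul_def)

lemma wmul_cons_red: "reduced z \<Longrightarrow> wmul (cons_red a w) z = cons_red a (wmul w z)"
proof (cases w)
  case Nil then show ?thesis by (simp add: cons_red_def wmul_def)
next
  case (Cons b w')
  assume z: "reduced z"
  show ?thesis
  proof (cases "a = b")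
    case True
    then show ?thesis using Cons cons_red_invol[OF wmul_reduced[OF z, of w'], of a]
      by (simp add: cons_red_def wmul_Cons)
  next
    case False then show ?thesis using Cons by (simp add: cons_red_def wmul_Cons)
  qed
qed

lemma wmul_assoc: "reduced z \<Longrightarrow> wmul (wmul x y) z = wmul x (wmul y z)"
  by (induction x) (auto simp: wmul_Cons wmul_cons_red, simp add: wmul_def)

lemma wmul_rev: "reduced x \<Longrightarrow> wmul (rev x) x = []"
proof (induction x)
  case Nil then show ?case by (simp add: wmul_def)
next
  case (Cons a x)
  have "wmul (rev (a # x)) (a # x) = wmul (rev x) (cons_red a (a # x))"
    by (simp add: wmul_def)
  also have "\<dots> = wmul (rev x) x" by (simp add: cons_red_def)
  finally show ?case using Cons reduced_tl by auto
qed

lemma reduced_rev: "reduced x \<Longrightarrow> reduced (rev x)"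
  by (simp add: reduced_def) (metis (mono_tags, lifting) successively_mono)

lemma wmul_Nil: "reduced y \<Longrightarrow> wmul [] y = y" by (simp add: wmul_def)

lemma group_FG: "group FG"
  apply (rule groupI)
      apply (simp_all add: FG_def wmul_reduced wmul_assoc wmul_Nil)
  apply (rule_tac x="rev x" in exI)
  using wmul_rev reduced_rev by auto

lemma FG_simps[simp]: "carrier FG = {w. reduced w}" "mult FG = wmul" "one FG = []"
  by (simp_all add: FG_def)

lemma len_cons_red: "even (length (cons_red a v)) \<longleftrightarrow> odd (length v)"
  by (cases v) (auto simp: cons_red_def)

lemma len_foldr: "even (length (foldr (\<lambda>a v. cons_red (g a) v) xs y)) \<longleftrightarrow> even (length xs + length y)"
  by (induction xs) (auto simp: len_cons_red)

lemma len_wmul: "even (length (wmul xs y)) \<longleftrightarrow> even (length xs + length y)"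
  using len_foldr[of id xs y] by (simp add: wmul_def)

lemma subst_reduced: "reduced (foldr (\<lambda>a v. cons_red (g a) v) xs y) \<or> \<not> reduced y"
  by (induction xs) (auto intro: cons_red_reduced)

lemma subst_const:
  "\<forall>a\<in>set u. \<sigma> a = j \<Longrightarrow> (x = [] \<or> hd x \<noteq> j) \<Longrightarrow>
   foldr (\<lambda>a v. cons_red (\<sigma> a) v) u x = (if even (length u) then x else j # x)"
  by (induction u) (auto simp: cons_red_def split: list.split)

lemma E_subgroup: "subgroup E FG"
proof (rule group.subgroupI[OF group_FG])
  show "E \<subseteq> carrier FG" by (auto simp: E_def)
  have "[] \<in> E" by (simp add: E_def)
  then show "E \<noteq> {}" by blast
next
  fix a assume a: "a \<in> E"
  then have ac: "a \<in> carrier FG" by (simp add: E_def)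
  have ic: "inv\<^bsub>FG\<^esub> a \<in> carrier FG" using group.inv_closed[OF group_FG ac] .
  have "a \<otimes>\<^bsub>FG\<^esub> inv\<^bsub>FG\<^esub> a = \<one>\<^bsub>FG\<^esub>" using group.r_inv[OF group_FG ac] .
  then have "wmul a (inv\<^bsub>FG\<^esub> a) = []" by simp
  then have "even (length a + length (inv\<^bsub>FG\<^esub> a))" using len_wmul[of a "inv\<^bsub>FG\<^esub> a"] by simp
  then show "inv\<^bsub>FG\<^esub> a \<in> E" using a ic by (auto simp: E_def)
next
  fix a b assume "a \<in> E" "b \<in> E"
  then show "a \<otimes>\<^bsub>FG\<^esub> b \<in> E" by (auto simp: E_def wmul_reduced len_wmul)
qed

lemma S0_E: "\<phi> \<in> S0 \<Longrightarrow> \<forall>w\<in>E. \<phi> w \<in> E"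
proof (induction rule: S0.induct)
  case (ident n \<sigma>)
  show ?case unfolding E_def subst_endo_def
    using subst_reduced[of \<sigma> _ "[]"] len_foldr[of \<sigma> _ "[]"] by auto
next
  case (conj k)
  show ?case unfolding E_def conj_endo_def
    by (auto simp: wmul_reduced len_wmul)
next
  case (comp \<phi> \<psi>) then show ?case by auto
qed

lemma S0_inv_E: "S0_invariant E"
  using S0_E unfolding S0_invariant_def by blast

lemma gens_all:
  assumes H: "subgroup H FG" and g: "\<And>i. [i] \<in> H"
  shows "reduced w \<Longrightarrow> w \<in> H"
proof (induction w)
  case Nil
  then show ?case using subgroup.one_closed[OF H] by simp
next
  case (Cons a w)
  have w: "w \<in> H" using Cons reduced_tl by blast
  have "[a] \<otimes>\<^bsub>FG\<^esub> w \<in> H" using subgroup.m_closed[OF H g w] .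
  moreover have "wmul [a] w = a # w" using Cons.prems
    by (cases w) (auto simp: wmul_def cons_red_def)
  ultimately show ?case by simp
qed

lemma pairs_all:
  assumes H: "subgroup H FG" and g: "\<And>k l. k \<noteq> l \<Longrightarrow> [k, l] \<in> H"
  shows "reduced w \<Longrightarrow> even (length w) \<Longrightarrow> w \<in> H"
proof (induction w rule: induct_list012)
  case 1
  then show ?case using subgroup.one_closed[OF H] by simp
next
  case (2 x) then show ?case by simp
next
  case (3 x y zs)
  have kl: "x \<noteq> y" using 3 by simp
  have w: "zs \<in> H" using 3 reduced_tl by auto
  have "[x, y] \<otimes>\<^bsub>FG\<^esub> zs \<in> H" using subgroup.m_closed[OF H g[OF kl] w] .
  moreover have "wmul [x, y] zs = x # y # zs" using "3.prems"
    by (cases zs) (auto simp: wmul_def cons_red_def)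
  ultimately show ?case by simp
qed

lemma bound: "\<exists>n. \<forall>a\<in>set (w::nat list). a < n"
  using finite_nat_set_iff_bounded by blast

lemma part2:
  assumes H: "subgroup H FG" and ne: "H \<noteq> carrier FG" and inv: "S0_invariant H"
  shows "H \<subseteq> E"
proof
  fix w assume wH: "w \<in> H"
  then have wr: "reduced w" using subgroup.subset[OF H] by auto
  show "w \<in> E"
  proof (rule ccontr)
    assume "w \<notin> E"
    then have odd: "odd (length w)" using wr by (auto simp: E_def)
    obtain n where n: "\<forall>a\<in>set w. a < n" using bound by blast
    have gi: "[i] \<in> H" for i
    proof -
      define \<sigma> where "\<sigma> = (\<lambda>x. if x < n then i else x)"
      have "subst_endo \<sigma> \<in> S0" by (rule S0.ident[of n]) (simp add: \<sigma>_def)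
      then have "subst_endo \<sigma> w \<in> H" using inv wH unfolding S0_invariant_def by blast
      moreover have "subst_endo \<sigma> w = [i]" unfolding subst_endo_def
        using subst_const[of w \<sigma> i "[]"] n odd by (auto simp: \<sigma>_def)
      ultimately show ?thesis by simp
    qed
    have "carrier FG \<subseteq> H" using gens_all[OF H gi] by auto
    then show False using ne subgroup.subset[OF H] by blast
  qed
qed

lemma subst_pair:
  assumes "k \<noteq> l" "a \<noteq> b" "a < n" "b < n"
  shows "subst_endo (\<lambda>x. if x < n then (if x = a then k else if x = b then l else x) else x) [a, b] = [k, l]"
  using assms by (auto simp: subst_endo_def cons_red_def)

lemma part3:
  assumes H: "subgroup H FG" and sub: "H \<subseteq> E" and ne: "H \<noteq> E" and inv: "S0_invariant H"
    and wH: "w \<in> H" and c: "count_list w i = 1"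
  shows False
proof -
  have wE: "w \<in> E" using wH sub by blast
  then have wr: "reduced w" and ev: "even (length w)" by (auto simp: E_def)
  have "i \<in> set w" using c count_list_0_iff[of w i] by auto
  then obtain u v where w: "w = u @ i # v" and iu: "i \<notin> set u" using split_list_first by metis
  have iv: "i \<notin> set v" using c w iu count_list_0_iff by fastforce
  obtain n0 where n0: "\<forall>a\<in>set w. a < n0" using bound by blast
  define n where "n = n0 + Suc (Suc i)"
  define j where "j = Suc i"
  have n: "\<forall>a\<in>set w. a < n" using n0 by (auto simp: n_def)
  define \<sigma> where "\<sigma> = (\<lambda>x. if x < n \<and> x \<noteq> i then j else x)"
  have sS: "subst_endo \<sigma> \<in> S0" by (rule S0.ident[of n]) (simp add: \<sigma>_def)
  have sw: "subst_endo \<sigma> w \<in> H" using inv wH sS unfolding S0_invariant_def by blast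
  have su: "\<forall>a\<in>set u. \<sigma> a = j" using n iu w by (auto simp: \<sigma>_def)
  have sv: "\<forall>a\<in>set v. \<sigma> a = j" using n iv w by (auto simp: \<sigma>_def)
  have si: "\<sigma> i = i" by (simp add: \<sigma>_def)
  have ij: "i \<noteq> j" by (simp add: j_def)
  define f where "f = (\<lambda>a v. cons_red (\<sigma> a) v)"
  have "subst_endo \<sigma> w = foldr f u (cons_red i (foldr f v []))"
    by (simp add: subst_endo_def w f_def si)
  also have "foldr f v [] = (if even (length v) then [] else [j])"
    using subst_const[OF sv, of "[]"] by (simp add: f_def)
  finally have eq: "subst_endo \<sigma> w = foldr f u (if even (length v) then [i] else [i, j])"
    using ij by (auto simp: cons_red_def)
  have "\<exists>a b. a \<noteq> b \<and> [a, b] \<in> H"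
  proof (cases "even (length v)")
    case True
    then have "odd (length u)" using ev w by auto
    then have "subst_endo \<sigma> w = [j, i]" using eq True subst_const[OF su, of "[i]"] ij
      by (simp add: f_def)
    then show ?thesis using sw ij by (metis)
  next
    case False
    then have "even (length u)" using ev w by auto
    then have "subst_endo \<sigma> w = [i, j]" using eq False subst_const[OF su, of "[i, j]"] ij
      by (simp add: f_def)
    then show ?thesis using sw ij by (metis)
  qed
  then obtain a b where ab: "a \<noteq> b" "[a, b] \<in> H" by blast
  have g: "[k, l] \<in> H" if kl: "k \<noteq> l" for k l
  proof -
    define m where "m = Suc (max a b)"
    define \<tau> where "\<tau> = (\<lambda>x. if x < m then (if x = a then k else if x = b then l else x) else x)"
    have "subst_endo \<tau> \<in> S0" by (rule S0.ident[of m]) (simp add: \<tau>_def)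
    then have "subst_endo \<tau> [a, b] \<in> H" using inv ab unfolding S0_invariant_def by blast
    then show ?thesis using subst_pair[OF kl ab(1), of m] m_def by (simp add: \<tau>_def)
  qed
  have "E \<subseteq> H" using pairs_all[OF H g] by (auto simp: E_def)
  then show False using sub ne by blast
qed

theorem mainTheorem6:
  shows "subgroup E FG \<and> E \<noteq> carrier FG \<and> S0_invariant E
    \<and> (\<forall>H. subgroup H FG \<and> H \<noteq> carrier FG \<and> S0_invariant H \<longrightarrow> H \<subseteq> E)
    \<and> (\<forall>H. subgroup H FG \<and> H \<subseteq> E \<and> H \<noteq> E \<and> S0_invariant H \<longrightarrow>
          (\<forall>w\<in>H. \<forall>i. count_list w i \<noteq> 1))"
proof -
  have "[0] \<in> carrier FG" "[0] \<notin> E" by (auto simp: E_def)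
  then have "E \<noteq> carrier FG" by blast
  then show ?thesis using E_subgroup S0_inv_E part2 part3 by blast
qed

end
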